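(* There exists a deterministic algorithm that finds the sink of any $n$-dimensional Matoušek-type USO using at most $n$ vertex evaluations.
   Context: All vectors and matrices are over $GF(2)$; $\oplus$ denotes xor. An orientation of the hypercube $\{0,1\}^n$ is given by an outmap $o:\{0,1\}^n\to\{0,1\}^n$, the edge $\{v,v\oplus e_i\}$ being directed away from $v$ iff $o(v)_i=1$. An $n$-dimensional Matoušek-type USO is an orientation $o(v)=M(v\oplus s)$ with $M=PAP^T$ for a permutation matrix $P$ and an invertible upper-triangular $A\in\{0,1\}^{n\times n}$, and $s\in\{0,1\}^n$, the unique sink ($o(s)=0$). A sink-finding algorithm queries vertices $v$ and receives $o(v)$; it succeeds when it can output $s$. *)

theory Defs
  imports Main
begin

text \<open>Vectors over GF(2) of dimension n are represented as functions
  nat => bool that vanish (are False) outside the index range below n.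
  Matrices over GF(2) are functions nat => nat => bool; only entries with
  both indices below n are relevant.\<close>

type_synonym gf2vec = "nat \<Rightarrow> bool"
type_synonym gf2mat = "nat \<Rightarrow> nat \<Rightarrow> bool"

definition cube :: "nat \<Rightarrow> gf2vec set" where
  "cube n = {v. \<forall>j\<ge>n. \<not> v j}"

definition xorv :: "gf2vec \<Rightarrow> gf2vec \<Rightarrow> gf2vec" where
  "xorv u v = (\<lambda>i. u i \<noteq> v i)"

definition mat_vec :: "nat \<Rightarrow> gf2mat \<Rightarrow> gf2vec \<Rightarrow> gf2vec" where
  "mat_vec n M v = (\<lambda>i. i < n \<and> odd (card {j. j < n \<and> M i j \<and> v j}))"

definition mat_mul :: "nat \<Rightarrow> gf2mat \<Rightarrow> gf2mat \<Rightarrow> gf2mat" where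
  "mat_mul n A B = (\<lambda>i k. i < n \<and> k < n \<and> odd (card {j. j < n \<and> A i j \<and> B j k}))"

definition transp :: "gf2mat \<Rightarrow> gf2mat" where
  "transp A = (\<lambda>i j. A j i)"

definition id_mat :: "nat \<Rightarrow> gf2mat" where
  "id_mat n = (\<lambda>i j. i < n \<and> i = j)"

definition mat_eq :: "nat \<Rightarrow> gf2mat \<Rightarrow> gf2mat \<Rightarrow> bool" where
  "mat_eq n A B \<longleftrightarrow> (\<forall>i<n. \<forall>j<n. A i j = B i j)"

definition invertible_mat :: "nat \<Rightarrow> gf2mat \<Rightarrow> bool" where
  "invertible_mat n A \<longleftrightarrow>
     (\<exists>B. mat_eq n (mat_mul n A B) (id_mat n) \<and> mat_eq n (mat_mul n B A) (id_mat n))"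

definition upper_triangular :: "nat \<Rightarrow> gf2mat \<Rightarrow> bool" where
  "upper_triangular n A \<longleftrightarrow> (\<forall>i<n. \<forall>j<n. j < i \<longrightarrow> \<not> A i j)"

definition perm_matrix :: "nat \<Rightarrow> gf2mat \<Rightarrow> bool" where
  "perm_matrix n P \<longleftrightarrow>
     (\<exists>\<sigma>. bij_betw \<sigma> {..<n} {..<n} \<and> (\<forall>i<n. \<forall>j<n. P i j = (\<sigma> j = i)))"

definition matousek_uso :: "nat \<Rightarrow> (gf2vec \<Rightarrow> gf2vec) \<Rightarrow> gf2vec \<Rightarrow> bool" where
  "matousek_uso n ou s \<longleftrightarrow> s \<in> cube n \<and>
     (\<exists>P A. perm_matrix n P \<and> upper_triangular n A \<and> invertible_mat n A \<and>
        (\<forall>v\<in>cube n. ou v = mat_vec n (mat_mul n (mat_mul n P A) (transp P)) (xorv v s)))"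

text \<open>A deterministic adaptive query algorithm: given the history of
  (queried vertex, answer) pairs it chooses the next query. run nxt ou k is the
  history after k queries.\<close>
fun run :: "((gf2vec \<times> gf2vec) list \<Rightarrow> gf2vec) \<Rightarrow> (gf2vec \<Rightarrow> gf2vec) \<Rightarrow> nat
            \<Rightarrow> (gf2vec \<times> gf2vec) list" where
  "run nxt ou 0 = []"
| "run nxt ou (Suc k) = (let h = run nxt ou k; q = nxt h in h @ [(q, ou q)])"

end

theory Submission
  imports Defs
begin

definition stepf :: "nat \<Rightarrow> (gf2vec \<times> gf2vec) list \<Rightarrow> gf2vec" where
  "stepf n h = (if h = [] then (\<lambda>_. False)
      else (\<lambda>i. i < n \<and> fst (last h) i \<noteq> snd (last h) i))"

lemma stepf_cube: "stepf n h \<in> cube n"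
  by (auto simp: stepf_def cube_def)

lemma stepf_run_Suc:
  "stepf n (run (stepf n) ou (Suc k)) =
    (\<lambda>i. i < n \<and> stepf n (run (stepf n) ou k) i \<noteq> ou (stepf n (run (stepf n) ou k)) i)"
  by (simp add: Let_def stepf_def)

lemma stepf_run_0: "stepf n (run (stepf n) ou 0) = (\<lambda>_. False)"
  by (simp add: stepf_def)

lemma card_single_odd: "S \<subseteq> {a} \<Longrightarrow> odd (card S) \<longleftrightarrow> a \<in> S"
proof -
  assume "S \<subseteq> {a}"
  hence "S = {} \<or> S = {a}" by blast
  thus ?thesis by auto
qed

lemma diag_one:
  assumes ut: "upper_triangular n A" and inv: "invertible_mat n A"
  shows "\<forall>t<n. A t t"
proof -
  obtain B where BA: "mat_eq n (mat_mul n B A) (id_mat n)"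
    using inv unfolding invertible_mat_def by blast
  have "\<forall>t. t < n \<longrightarrow> A t t \<and> (\<forall>u<n. t < u \<longrightarrow> \<not> B u t)"
  proof (intro allI)
    fix t
    show "t < n \<longrightarrow> A t t \<and> (\<forall>u<n. t < u \<longrightarrow> \<not> B u t)"
    proof (induction t rule: less_induct)
      case (less t)
      show ?case
      proof
        assume tn: "t < n"
        have key: "\<And>u. u < n \<Longrightarrow> t \<le> u \<Longrightarrow> (B u t \<and> A t t) = (u = t)"
        proof -
          fix u assume un: "u < n" and tu: "t \<le> u"
          have S: "{j. j < n \<and> B u j \<and> A j t} \<subseteq> {t}"
          proof
            fix j assume j: "j \<in> {j. j < n \<and> B u j \<and> A j t}"
            hence "j \<le> t" using ut tn unfolding upper_triangular_def
              by (metis not_le_imp_less mem_Collect_eq)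
            moreover have "\<not> j < t"
              using less.IH[of j] j tu un by auto
            ultimately show "j \<in> {t}" by auto
          qed
          have "mat_mul n B A u t = id_mat n u t" using BA un tn unfolding mat_eq_def by blast
          hence "odd (card {j. j < n \<and> B u j \<and> A j t}) = (u = t)"
            using un tn by (simp add: mat_mul_def id_mat_def)
          thus "(B u t \<and> A t t) = (u = t)"
            using card_single_odd[OF S] tn by auto
        qed
        show "A t t \<and> (\<forall>u<n. t < u \<longrightarrow> \<not> B u t)"
          using key[of t] key tn by fastforce
      qed
    qed
  qed
  thus ?thesis by blast
qed

theorem theorem18:
  fixes n :: nat
  shows "\<exists>(nxt :: (gf2vec \<times> gf2vec) list \<Rightarrow> gf2vec) (ans :: (gf2vec \<times> gf2vec) list \<Rightarrow> gf2vec).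
           (\<forall>h. nxt h \<in> cube n) \<and>
           (\<forall>ou s. matousek_uso n ou s \<longrightarrow> ans (run nxt ou n) = s)"
proof (intro exI conjI allI impI)
  show "\<And>h. stepf n h \<in> cube n" by (rule stepf_cube)
  fix ou s assume mu: "matousek_uso n ou s"
  then obtain P A where sc: "s \<in> cube n" and pm: "perm_matrix n P" and ut: "upper_triangular n A"
    and inv: "invertible_mat n A"
    and ouM: "\<forall>v\<in>cube n. ou v = mat_vec n (mat_mul n (mat_mul n P A) (transp P)) (xorv v s)"
    unfolding matousek_uso_def by blast
  obtain \<sigma> where bij: "bij_betw \<sigma> {..<n} {..<n}" and Pd: "\<forall>i<n. \<forall>j<n. P i j = (\<sigma> j = i)"
    using pm unfolding perm_matrix_def by blast
  define \<tau> where "\<tau> = inv_into {..<n} \<sigma>"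
  have t1: "\<And>i. i < n \<Longrightarrow> \<tau> i < n" unfolding \<tau>_def
    using bij_betw_inv_into[OF bij] bij_betwE by blast
  have t2: "\<And>i. i < n \<Longrightarrow> \<sigma> (\<tau> i) = i" unfolding \<tau>_def
    using bij_betw_inv_into_right[OF bij] by blast
  have t3: "\<And>j. j < n \<Longrightarrow> \<tau> (\<sigma> j) = j" unfolding \<tau>_def
    using inv_into_f_f bij bij_betw_imp_inj_on by (metis lessThan_iff)
  have s1: "\<And>j. j < n \<Longrightarrow> \<sigma> j < n" using bij bij_betwE by blast
  define M where "M = mat_mul n (mat_mul n P A) (transp P)"
  have PA: "\<And>i k. i < n \<Longrightarrow> k < n \<Longrightarrow> mat_mul n P A i k = A (\<tau> i) k"
  proof -
    fix i k assume i: "i < n" and k: "k < n"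
    have "{j. j < n \<and> P i j \<and> A j k} = (if A (\<tau> i) k then {\<tau> i} else {})"
      using Pd i t1 t2 t3 by auto
    thus "mat_mul n P A i k = A (\<tau> i) k" using i k by (simp add: mat_mul_def)
  qed
  have Mij: "\<And>i l. i < n \<Longrightarrow> l < n \<Longrightarrow> M i l = A (\<tau> i) (\<tau> l)"
  proof -
    fix i l assume i: "i < n" and l: "l < n"
    have "{k. k < n \<and> mat_mul n P A i k \<and> transp P k l} = (if A (\<tau> i) (\<tau> l) then {\<tau> l} else {})"
      using Pd PA i l t1 t2 t3 s1 unfolding transp_def by auto
    thus "M i l = A (\<tau> i) (\<tau> l)" using i l by (simp add: mat_mul_def M_def)
  qed
  have diag: "\<And>i. i < n \<Longrightarrow> M i i" using Mij diag_one[OF ut inv] t1 by simp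
  have ord: "\<And>i j. i < n \<Longrightarrow> j < n \<Longrightarrow> M i j \<Longrightarrow> i \<noteq> j \<Longrightarrow> \<tau> i < \<tau> j"
  proof -
    fix i j assume i: "i < n" and j: "j < n" and m: "M i j" and ne: "i \<noteq> j"
    have "\<tau> i \<noteq> \<tau> j" using ne t2 i j by metis
    moreover have "\<not> \<tau> j < \<tau> i" using m Mij[OF i j] ut t1 i j
      unfolding upper_triangular_def by blast
    ultimately show "\<tau> i < \<tau> j" by simp
  qed
  define q where "q k = stepf n (run (stepf n) ou k)" for k
  have q0: "q 0 = (\<lambda>_. False)" unfolding q_def by (rule stepf_run_0)
  have qS: "\<And>k. q (Suc k) = (\<lambda>i. i < n \<and> q k i \<noteq> ou (q k) i)"
    unfolding q_def by (rule stepf_run_Suc)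
  have qc: "\<And>k. q k \<in> cube n" unfolding q_def by (rule stepf_cube)
  have inv_k: "\<forall>j<n. n \<le> \<tau> j + k \<longrightarrow> q k j = s j" for k
  proof (induction k)
    case 0
    then show ?case using t1 by fastforce
  next
    case (Suc k)
    show ?case
    proof (intro allI impI)
      fix i assume i: "i < n" and le: "n \<le> \<tau> i + Suc k"
      let ?x = "xorv (q k) s"
      have S: "{j. j < n \<and> M i j \<and> ?x j} \<subseteq> {i}"
      proof
        fix j assume j: "j \<in> {j. j < n \<and> M i j \<and> ?x j}"
        show "j \<in> {i}"
        proof (rule ccontr)
          assume "j \<notin> {i}"
          hence "\<tau> i < \<tau> j" using ord[of i j] j i by auto
          hence "q k j = s j" using Suc.IH j le by auto
          thus False using j by (simp add: xorv_def)
        qed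
      qed
      have "ou (q k) i = mat_vec n M ?x i" using bspec[OF ouM qc[of k]] unfolding M_def by simp
      also have "\<dots> = ?x i" using card_single_odd[OF S] i diag[OF i]
        by (simp add: mat_vec_def)
      finally show "q (Suc k) i = s i" using qS i by (auto simp: xorv_def)
    qed
  qed
  have "q n = s"
  proof
    fix j show "q n j = s j"
    proof (cases "j < n")
      case True thus ?thesis using inv_k[of n] by simp
    next
      case False thus ?thesis using qc[of n] sc by (simp add: cube_def)
    qed
  qed
  thus "stepf n (run (stepf n) ou n) = s" unfolding q_def .
qed

end
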